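(* Let $\mathbb F_q$ be a finite field with $q$ elements, let $n\ge 2$, let $a_1,\dots,a_n\in\mathbb F_q^*$, let $m_1,\dots,m_n$ be positive integers and put $d_j=\gcd(m_j,q-1)$ for $j=1,\dots,n$. If $d_1,\dots,d_n$ are pairwise coprime, then the number of $(x_1,\dots,x_n)\in\mathbb F_q^n$ with $x_1\cdots x_n\ne 0$ satisfying $$a_1x_1^{d_1}+\dots+a_nx_n^{d_n}=0$$ equals $$\frac{(q-1)^n+(-1)^n(q-1)}{q}.$$
   Context: $\mathbb F_q^*=\mathbb F_q\setminus\{0\}$. *)

theory Defs
  imports Complex_Main "HOL-Library.FuncSet"
begin

end

theory Submission
  imports Defs
begin

definition powok :: "nat \<Rightarrow> 'a::field \<Rightarrow> bool" where
  "powok e c \<longleftrightarrow> (\<exists>z. z \<noteq> 0 \<and> z ^ e = c)"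

lemma powok_mult: "powok e c1 \<Longrightarrow> powok e c2 \<Longrightarrow> powok e (c1 * c2)"
  unfolding powok_def by (metis mult_eq_0_iff power_mult_distrib)

lemma powok_inv: "powok e c \<Longrightarrow> powok e (inverse c)"
  unfolding powok_def by (metis inverse_nonzero_iff_nonzero power_inverse)

lemma powok_div: "powok e c1 \<Longrightarrow> powok e c2 \<Longrightarrow> powok e (c1 / c2)"
  by (simp add: divide_inverse powok_inv powok_mult)

lemma powok_nz: "powok e c \<Longrightarrow> c \<noteq> 0"
  by (auto simp: powok_def)

lemma powok_dvd: assumes "e dvd f" "s \<noteq> 0" shows "powok e (s ^ f)"
proof -
  obtain k where "f = e * k" using assms(1) by (auto elim: dvdE)
  then have "s ^ f = (s ^ k) ^ e" by (simp add: power_mult[symmetric] mult.commute)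
  then show ?thesis unfolding powok_def using assms(2) by (intro exI[of _ "s ^ k"]) auto
qed

lemma surj_scal:
  fixes y :: "nat \<Rightarrow> 'a::field" and d :: "nat \<Rightarrow> nat"
  assumes "\<forall>j<n. d j > 0" "\<forall>i<n. \<forall>j<n. i \<noteq> j \<longrightarrow> coprime (d i) (d j)" "\<forall>j<n. y j \<noteq> 0"
  shows "\<exists>t. t \<noteq> 0 \<and> (\<forall>j<n. powok (d j) (t * y j))"
  using assms
proof (induction n)
  case 0 show ?case by (rule exI[of _ 1]) simp
next
  case (Suc n)
  have "\<exists>t. t \<noteq> 0 \<and> (\<forall>j<n. powok (d j) (t * y j))"
    using Suc.prems by (intro Suc.IH) auto
  then obtain t' where t': "t' \<noteq> 0" "\<forall>j<n. powok (d j) (t' * y j)" by auto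
  define D where "D = (\<Prod>j<n. d j)"
  have Dpos: "D > 0" using Suc.prems(1) by (auto simp: D_def)
  have cop: "coprime D (d n)" unfolding D_def using Suc.prems(2) by (auto intro!: prod_coprime_left)
  define u where "u = t' * y n"
  have u0: "u \<noteq> 0" using t' Suc.prems(3) by (simp add: u_def)
  obtain \<alpha> \<beta> where ab: "D * \<alpha> = d n * \<beta> + 1" using bezout_nat[of D "d n"] Dpos cop by auto
  define s where "s = inverse u ^ \<alpha>"
  have s0: "s \<noteq> 0" using u0 by (simp add: s_def)
  have "u * s ^ D = u * inverse u ^ (D * \<alpha>)" by (simp add: s_def power_mult[symmetric] mult.commute)
  also have "\<dots> = u * inverse u * inverse u ^ (d n * \<beta>)" using ab by (simp add: power_add)
  also have "\<dots> = (inverse u ^ \<beta>) ^ d n" using u0 by (simp add: power_mult mult.commute)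
  finally have un: "powok (d n) (u * s ^ D)" unfolding powok_def using u0 by (intro exI[of _ "inverse u ^ \<beta>"]) auto
  show ?case
  proof (intro exI[of _ "t' * s ^ D"] conjI allI impI)
    show "t' * s ^ D \<noteq> 0" using t' s0 by simp
    fix j assume j: "j < Suc n"
    show "powok (d j) (t' * s ^ D * y j)"
    proof (cases "j = n")
      case True then show ?thesis using un by (simp add: u_def mult_ac)
    next
      case False
      then have "j < n" using j by simp
      then have "powok (d j) (t' * y j * s ^ D)"
        using t' s0 \<open>j < n\<close> by (intro powok_mult[of _ "t' * y j"] powok_dvd) (auto simp: D_def)
      then show ?thesis by (simp add: mult_ac)
    qed
  qed
qed


definition Vn :: "nat \<Rightarrow> (nat \<Rightarrow> 'a::field) set" where
  "Vn n = PiE {..<n} (\<lambda>_. UNIV - {0})"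
definition psi :: "nat \<Rightarrow> (nat \<Rightarrow> nat) \<Rightarrow> (nat \<Rightarrow> 'a::field) \<Rightarrow> nat \<Rightarrow> 'a" where
  "psi n d x = (\<lambda>j\<in>{..<n}. x j ^ d j)"
definition Kn :: "nat \<Rightarrow> (nat \<Rightarrow> nat) \<Rightarrow> (nat \<Rightarrow> 'a::field) set" where
  "Kn n d = {k \<in> Vn n. \<forall>j<n. powok (d j) (k j)}"
definition sc :: "nat \<Rightarrow> 'a::field \<Rightarrow> (nat \<Rightarrow> 'a) \<Rightarrow> nat \<Rightarrow> 'a" where
  "sc n t y = (\<lambda>j\<in>{..<n}. t * y j)"

lemma Vn_iff: "x \<in> Vn n \<longleftrightarrow> (\<forall>j<n. x j \<noteq> 0) \<and> (\<forall>j. j \<ge> n \<longrightarrow> x j = undefined)"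
  by (auto simp: Vn_def PiE_iff extensional_def)

lemma finite_Vn: "finite (Vn n :: (nat \<Rightarrow> 'a::{field,finite}) set)"
  unfolding Vn_def by (rule finite_PiE) auto

lemma psi_K: "x \<in> Vn n \<Longrightarrow> psi n d x \<in> Kn n d"
  by (auto simp: Kn_def psi_def Vn_iff powok_def)

lemma sc_V: "y \<in> Vn n \<Longrightarrow> t \<noteq> 0 \<Longrightarrow> sc n t y \<in> Vn n"
  by (auto simp: sc_def Vn_iff)

lemma sc_K: "y \<in> Vn n \<Longrightarrow> t \<noteq> 0 \<Longrightarrow> sc n t y \<in> Kn n d \<longleftrightarrow> (\<forall>j<n. powok (d j) (t * y j))"
  by (auto simp: sc_def Kn_def sc_V[simplified sc_def])

lemma sc_inv: "y \<in> Vn n \<Longrightarrow> t \<noteq> 0 \<Longrightarrow> sc n (inverse t) (sc n t y) = y"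
  by (auto simp: sc_def Vn_iff fun_eq_iff)

lemma fiber_card:
  fixes d :: "nat \<Rightarrow> nat"
  assumes k: "(k :: nat \<Rightarrow> 'a::field) \<in> Kn n d"
  shows "card {x\<in>Vn n. psi n d x = k} = card {x\<in>Vn n. psi n d x = (\<lambda>j\<in>{..<n}. 1::'a)}"
proof -
  define x0 where "x0 = (\<lambda>j\<in>{..<n}. SOME z. z \<noteq> 0 \<and> z ^ d j = k j)"
  have x0: "x0 j \<noteq> 0 \<and> x0 j ^ d j = k j" if "j < n" for j
  proof -
    have "\<exists>z. z \<noteq> 0 \<and> z ^ d j = k j" using k that by (auto simp: Kn_def powok_def)
    then show ?thesis unfolding x0_def using that someI_ex[OF \<open>\<exists>z. z \<noteq> 0 \<and> z ^ d j = k j\<close>] by simp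
  qed
  have kV: "k \<in> Vn n" using k by (simp add: Kn_def)
  have "bij_betw (\<lambda>x::nat\<Rightarrow>'a. \<lambda>j\<in>{..<n}. x0 j * x j) {x \<in> Vn n. psi n d x = (\<lambda>j\<in>{..<n}. 1)} {x \<in> Vn n. psi n d x = k}"
  proof (rule bij_betw_byWitness[where f' = "\<lambda>x::nat\<Rightarrow>'a. \<lambda>j\<in>{..<n}. x j / x0 j"])
    show "\<forall>a\<in>{x \<in> Vn n. psi n d x = (\<lambda>j\<in>{..<n}. 1)}.
       (\<lambda>j\<in>{..<n}. (\<lambda>j\<in>{..<n}. x0 j * a j) j / x0 j) = a"
      using x0 by (auto simp: Vn_iff fun_eq_iff)
    show "\<forall>a'\<in>{x \<in> Vn n. psi n d x = k}.
       (\<lambda>j\<in>{..<n}. x0 j * (\<lambda>j\<in>{..<n}. a' j / x0 j) j) = a'"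
      using x0 by (auto simp: Vn_iff fun_eq_iff)
    show "(\<lambda>x::nat\<Rightarrow>'a. \<lambda>j\<in>{..<n}. x0 j * x j) ` {x \<in> Vn n. psi n d x = (\<lambda>j\<in>{..<n}. 1)}
          \<subseteq> {x \<in> Vn n. psi n d x = k}"
    proof clarify
      fix x :: "nat \<Rightarrow> 'a" assume x: "x \<in> Vn n" "psi n d x = (\<lambda>j\<in>{..<n}. 1)"
      have "x j ^ d j = 1" if "j < n" for j using x(2) that by (auto simp: psi_def fun_eq_iff dest: spec[of _ j])
      then show "(\<lambda>j\<in>{..<n}. x0 j * x j) \<in> Vn n \<and> psi n d (\<lambda>j\<in>{..<n}. x0 j * x j) = k"
        using x(1) x0 kV by (auto simp: Vn_iff psi_def fun_eq_iff power_mult_distrib)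
    qed
    show "(\<lambda>x::nat\<Rightarrow>'a. \<lambda>j\<in>{..<n}. x j / x0 j) ` {x \<in> Vn n. psi n d x = k}
          \<subseteq> {x \<in> Vn n. psi n d x = (\<lambda>j\<in>{..<n}. 1)}"
    proof clarify
      fix x :: "nat \<Rightarrow> 'a" assume x: "x \<in> Vn n" "k = psi n d x"
      have "x j ^ d j = k j" if "j < n" for j using x(2)[symmetric] that by (auto simp: psi_def)
      then show "(\<lambda>j\<in>{..<n}. x j / x0 j) \<in> Vn n \<and> psi n d (\<lambda>j\<in>{..<n}. x j / x0 j) = (\<lambda>j\<in>{..<n}. 1)"
        using x(1) x0 kV by (auto simp: Vn_iff psi_def fun_eq_iff power_divide)
    qed
  qed
  from bij_betw_same_card[OF this] show ?thesis by simp
qed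


lemma count_preimage:
  fixes d :: "nat \<Rightarrow> nat" and U :: "(nat \<Rightarrow> 'a::{field,finite}) set"
  shows "card {x\<in>Vn n. psi n d x \<in> U} =
         card {x\<in>Vn n. psi n d x = (\<lambda>j\<in>{..<n}. 1::'a)} * card (U \<inter> Kn n d)"
proof -
  have eq: "{x\<in>Vn n. psi n d x \<in> U} = (\<Union>k\<in>U \<inter> Kn n d. {x\<in>Vn n. psi n d x = k})"
    using psi_K by blast
  have "card (\<Union>k\<in>U \<inter> Kn n d. {x\<in>Vn n. psi n d x = k}) =
        (\<Sum>k\<in>U \<inter> Kn n d. card {x\<in>Vn n. psi n d x = k})"
    by (rule card_UN_disjoint) (auto intro: finite_subset[OF _ finite_Vn] simp: Kn_def)
  also have "\<dots> = (\<Sum>k\<in>U \<inter> Kn n d. card {x\<in>Vn n. psi n d x = (\<lambda>j\<in>{..<n}. 1::'a)})"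
    by (rule sum.cong) (auto intro: fiber_card)
  finally show ?thesis using eq by simp
qed

lemma double_count:
  fixes d :: "nat \<Rightarrow> nat" and U :: "(nat \<Rightarrow> 'a::{field,finite}) set"
  assumes dpos: "\<forall>j<n. d j > 0" and cop: "\<forall>i<n. \<forall>j<n. i \<noteq> j \<longrightarrow> coprime (d i) (d j)"
    and UV: "U \<subseteq> Vn n" and Usc: "\<And>t y. t \<noteq> 0 \<Longrightarrow> y \<in> U \<Longrightarrow> sc n t y \<in> U"
  shows "card (UNIV - {0::'a}) * card (U \<inter> Kn n d) =
         card U * card {s::'a. s \<noteq> 0 \<and> (\<forall>j<n. powok (d j) s)}"
proof -
  let ?G = "UNIV - {0::'a}"
  let ?A = "{s::'a. s \<noteq> 0 \<and> (\<forall>j<n. powok (d j) s)}"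
  let ?P = "\<lambda>t y. sc n t y \<in> Kn n d"
  have finU: "finite U" using UV finite_Vn finite_subset by blast
  have 1: "card {y\<in>U. ?P t y} = card (U \<inter> Kn n d)" if t: "t \<in> ?G" for t
  proof -
    have "bij_betw (sc n t) {y\<in>U. ?P t y} (U \<inter> Kn n d)"
    proof (rule bij_betw_byWitness[where f' = "sc n (inverse t)"])
      show "\<forall>a\<in>{y \<in> U. ?P t y}. sc n (inverse t) (sc n t a) = a"
        using UV t sc_inv by blast
      show "\<forall>a'\<in>U \<inter> Kn n d. sc n t (sc n (inverse t) a') = a'"
        using UV t sc_inv[of _ n "inverse t"] by (auto simp: Kn_def)
      show "sc n t ` {y \<in> U. ?P t y} \<subseteq> U \<inter> Kn n d" using Usc t by auto
      show "sc n (inverse t) ` (U \<inter> Kn n d) \<subseteq> {y \<in> U. ?P t y}"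
        using Usc t UV sc_inv[of _ n "inverse t"] by (auto simp: Kn_def)
    qed
    then show ?thesis by (rule bij_betw_same_card)
  qed
  have 2: "card {t\<in>?G. ?P t y} = card ?A" if y: "y \<in> U" for y
  proof -
    have yV: "y \<in> Vn n" using y UV by auto
    then have "\<forall>j<n. y j \<noteq> 0" by (simp add: Vn_iff)
    then obtain t0 where t0: "t0 \<noteq> 0" "\<forall>j<n. powok (d j) (t0 * y j)"
      using surj_scal[OF dpos cop] by blast
    have Peq: "?P t y \<longleftrightarrow> (\<forall>j<n. powok (d j) (t * y j))" if "t \<noteq> 0" for t
      using sc_K[OF yV that] .
    have "bij_betw (\<lambda>s. s * t0) ?A {t\<in>?G. ?P t y}"
    proof (rule bij_betw_byWitness[where f' = "\<lambda>t. t / t0"])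
      show "\<forall>a\<in>?A. a * t0 / t0 = a" using t0 by simp
      show "\<forall>a'\<in>{t\<in>?G. ?P t y}. a' / t0 * t0 = a'" using t0 by simp
      show "(\<lambda>s. s * t0) ` ?A \<subseteq> {t\<in>?G. ?P t y}"
      proof clarify
        fix s :: 'a assume s: "s \<noteq> 0" "\<forall>j<n. powok (d j) s"
        have "powok (d j) (s * t0 * y j)" if "j < n" for j
          using powok_mult[OF s(2)[rule_format, OF that] t0(2)[rule_format, OF that]]
          by (simp add: mult_ac)
        then show "s * t0 \<in> ?G \<and> ?P (s * t0) y" using s t0 Peq[of "s * t0"] by auto
      qed
      show "(\<lambda>t. t / t0) ` {t\<in>?G. ?P t y} \<subseteq> ?A"
      proof (intro subsetI)
        fix z assume "z \<in> (\<lambda>t. t / t0) ` {t\<in>?G. ?P t y}"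
        then obtain t where t: "t \<in> ?G" "?P t y" and z: "z = t / t0" by auto
        then have tt: "\<forall>j<n. powok (d j) (t * y j)" using Peq by auto
        have "powok (d j) (t / t0)" if "j < n" for j
        proof -
          have "powok (d j) ((t * y j) / (t0 * y j))"
            using powok_div tt t0 that by blast
          moreover have "y j \<noteq> 0" using \<open>\<forall>j<n. y j \<noteq> 0\<close> that by auto
          ultimately show ?thesis by simp
        qed
        then show "z \<in> ?A" using t t0 z by auto
      qed
    qed
    then show ?thesis by (simp add: bij_betw_same_card)
  qed
  let ?S = "Sigma ?G (\<lambda>t. {y\<in>U. ?P t y})"
  let ?S' = "Sigma U (\<lambda>y. {t\<in>?G. ?P t y})"
  have "card ?S = (\<Sum>t\<in>?G. card {y\<in>U. ?P t y})"
    using finU by (intro card_SigmaI) auto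
  also have "\<dots> = card ?G * card (U \<inter> Kn n d)" using 1 by simp
  finally have S1: "card ?S = card ?G * card (U \<inter> Kn n d)" .
  have "card ?S' = (\<Sum>y\<in>U. card {t\<in>?G. ?P t y})"
    using finU by (intro card_SigmaI) auto
  also have "\<dots> = card U * card ?A" using 2 by simp
  finally have S2: "card ?S' = card U * card ?A" .
  have "?S' = (\<lambda>(t, y). (y, t)) ` ?S" by auto
  moreover have "inj_on (\<lambda>(t, y). (y, t)) ?S" by (auto simp: inj_on_def)
  ultimately have "card ?S' = card ?S" by (simp add: card_image)
  then show ?thesis using S1 S2 by simp
qed


lemma card_Vn: "card (Vn n :: (nat \<Rightarrow> 'a::{field,finite}) set) = (card (UNIV::'a set) - 1) ^ n"
  unfolding Vn_def by (simp add: card_PiE card_Diff_singleton)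

lemma lin_step:
  fixes a :: "nat \<Rightarrow> 'a::{field,finite}"
  assumes an: "a n \<noteq> 0"
  shows "card {y\<in>Vn (Suc n). (\<Sum>j<Suc n. a j * y j) = 0} = card {z\<in>Vn n. (\<Sum>j<n. a j * z j) \<noteq> 0}"
proof -
  let ?s = "\<lambda>z. \<Sum>j<n. a j * z j"
  have sr: "?s (restrict y {..<n}) = ?s y" for y :: "nat \<Rightarrow> 'a" by (rule sum.cong) auto
  have "bij_betw (\<lambda>y. restrict y {..<n}) {y\<in>Vn (Suc n). (\<Sum>j<Suc n. a j * y j) = 0} {z\<in>Vn n. ?s z \<noteq> 0}"
  proof (rule bij_betw_byWitness[where f' = "\<lambda>z. z(n := - ?s z / a n)"])
    show "\<forall>y\<in>{y\<in>Vn (Suc n). (\<Sum>j<Suc n. a j * y j) = 0}.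
            (restrict y {..<n})(n := - ?s (restrict y {..<n}) / a n) = y"
    proof
      fix y assume y: "y \<in> {y\<in>Vn (Suc n). (\<Sum>j<Suc n. a j * y j) = 0}"
      then have "?s y + a n * y n = 0" by simp
      then have "y n = - ?s y / a n" using an by (simp add: field_simps add_eq_0_iff)
      then show "(restrict y {..<n})(n := - ?s (restrict y {..<n}) / a n) = y"
        using y sr by (auto simp: fun_eq_iff Vn_iff)
    qed
    show "\<forall>z\<in>{z\<in>Vn n. ?s z \<noteq> 0}. restrict (z(n := - ?s z / a n)) {..<n} = z"
      by (auto simp: fun_eq_iff Vn_iff)
    show "(\<lambda>y. restrict y {..<n}) ` {y\<in>Vn (Suc n). (\<Sum>j<Suc n. a j * y j) = 0} \<subseteq> {z\<in>Vn n. ?s z \<noteq> 0}"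
    proof (intro subsetI)
      fix w assume "w \<in> (\<lambda>y. restrict y {..<n}) ` {y\<in>Vn (Suc n). (\<Sum>j<Suc n. a j * y j) = 0}"
      then obtain y where y: "y \<in> Vn (Suc n)" "(\<Sum>j<Suc n. a j * y j) = 0" and w: "w = restrict y {..<n}" by auto
      have "y n \<noteq> 0" using y(1) by (simp add: Vn_iff)
      then have "?s y \<noteq> 0" using y(2) an by (simp add: add_eq_0_iff) (metis neg_equal_0_iff_equal mult_eq_0_iff)
      then show "w \<in> {z\<in>Vn n. ?s z \<noteq> 0}" using y(1) w sr by (auto simp: Vn_iff)
    qed
    show "(\<lambda>z. z(n := - ?s z / a n)) ` {z\<in>Vn n. ?s z \<noteq> 0} \<subseteq> {y\<in>Vn (Suc n). (\<Sum>j<Suc n. a j * y j) = 0}"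
    proof (intro subsetI)
      fix w assume "w \<in> (\<lambda>z. z(n := - ?s z / a n)) ` {z\<in>Vn n. ?s z \<noteq> 0}"
      then obtain z where z: "z \<in> Vn n" "?s z \<noteq> 0" and w: "w = z(n := - ?s z / a n)" by auto
      have "?s w = ?s z" unfolding w by (rule sum.cong) auto
      then have "(\<Sum>j<Suc n. a j * w j) = 0" using an by (simp add: w)
      moreover have "w \<in> Vn (Suc n)" using z an by (auto simp: w Vn_iff)
      ultimately show "w \<in> {y\<in>Vn (Suc n). (\<Sum>j<Suc n. a j * y j) = 0}" by simp
    qed
  qed
  from bij_betw_same_card[OF this] show ?thesis .
qed

lemma alg: assumes "(X::real) = P - Y" "Y * Q = P + s * (Q - 1)" shows "X * Q = P * (Q - 1) + (- s) * (Q - 1)"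
proof -
  have "X * Q = P * Q - Y * Q" using assms(1) by (simp add: left_diff_distrib)
  then show ?thesis using assms(2) by (simp add: algebra_simps)
qed

lemma lin_count:
  fixes a :: "nat \<Rightarrow> 'a::{field,finite}"
  assumes "\<forall>j<n. a j \<noteq> 0"
  shows "real (card {y\<in>Vn n. (\<Sum>j<n. a j * y j) = 0}) * real (card (UNIV::'a set))
     = (real (card (UNIV::'a set)) - 1) ^ n + (-1) ^ n * (real (card (UNIV::'a set)) - 1)"
  using assms
proof (induction n)
  case 0
  have "Vn 0 = {(\<lambda>_. undefined) :: nat \<Rightarrow> 'a}" by (auto simp: Vn_def)
  then show ?case by (simp add: algebra_simps)
next
  case (Suc n)
  let ?q = "card (UNIV::'a set)"
  let ?s = "\<lambda>z::nat\<Rightarrow>'a. \<Sum>j<n. a j * z j"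
  have q1: "?q \<ge> 1" by (simp add: Suc_leI finite_UNIV_card_ge_0)
  have IH: "real (card {y\<in>Vn n. ?s y = 0}) * real ?q = (real ?q - 1) ^ n + (-1) ^ n * (real ?q - 1)"
    using Suc by auto
  have "card {y\<in>Vn (Suc n). (\<Sum>j<Suc n. a j * y j) = 0} = card {z\<in>Vn n. ?s z \<noteq> 0}"
    using Suc.prems by (intro lin_step) auto
  also have "card {z\<in>Vn n. ?s z \<noteq> 0} = card (Vn n :: (nat \<Rightarrow> 'a) set) - card {y\<in>Vn n. ?s y = 0}"
  proof -
    have "{z\<in>Vn n. ?s z \<noteq> 0} = Vn n - {y\<in>Vn n. ?s y = 0}" by auto
    then show ?thesis by (simp, subst card_Diff_subset) (auto intro: finite_subset[OF _ finite_Vn])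
  qed
  finally have "real (card {y\<in>Vn (Suc n). (\<Sum>j<Suc n. a j * y j) = 0}) =
       (real ?q - 1) ^ n - real (card {y\<in>Vn n. ?s y = 0})"
    using card_mono[OF finite_Vn, of "{y\<in>Vn n. ?s y = 0}"] q1
    by (simp add: card_Vn of_nat_diff)
  from alg[OF this IH] show ?case by (simp add: mult.commute)
qed


theorem corollary1:
  fixes a :: "nat \<Rightarrow> 'a :: {finite, field}"
    and m :: "nat \<Rightarrow> nat"
    and n :: nat
  defines "q \<equiv> card (UNIV :: 'a set)"
  defines "d \<equiv> (\<lambda>j. gcd (m j) (q - 1))"
  assumes "n \<ge> 2"
    and "\<forall>j<n. a j \<noteq> 0"
    and "\<forall>j<n. m j > 0"
    and "\<forall>i<n. \<forall>j<n. i \<noteq> j \<longrightarrow> coprime (d i) (d j)"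
  shows "real (card {x \<in> Pi\<^sub>E {..<n} (\<lambda>_. UNIV - {0}).
                       (\<Sum>j<n. a j * x j ^ d j) = 0})
         = ((real q - 1) ^ n + (-1) ^ n * (real q - 1)) / real q"
proof -
  note an = assms(4) and cop = assms(6)
  have dpos: "\<forall>j<n. d j > 0" using assms(5) by (simp add: d_def)
  define T where "T = {y\<in>Vn n. (\<Sum>j<n. a j * y j) = (0::'a)}"
  define c where "c = card {x\<in>Vn n. psi n d x = (\<lambda>j\<in>{..<n}. 1::'a)}"
  define Ac where "Ac = card {s::'a. s \<noteq> 0 \<and> (\<forall>j<n. powok (d j) s)}"
  let ?K = "Kn n d :: (nat \<Rightarrow> 'a) set"
  have q2: "q \<ge> 2"
  proof -
    have "card {0::'a, 1} \<le> q" unfolding q_def by (rule card_mono) auto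
    then show ?thesis by simp
  qed
  have cardG: "card (UNIV - {0::'a}) = q - 1" by (simp add: q_def card_Diff_singleton)
  have TV: "T \<subseteq> Vn n" by (auto simp: T_def)
  have Tsc: "sc n t y \<in> T" if "t \<noteq> 0" "y \<in> T" for t y
  proof -
    have "(\<Sum>j<n. a j * sc n t y j) = t * (\<Sum>j<n. a j * y j)"
      by (simp add: sc_def sum_distrib_left mult_ac)
    then show ?thesis using that sc_V[of y n t] by (auto simp: T_def)
  qed
  have Vsc: "sc n t y \<in> Vn n" if "t \<noteq> 0" "y \<in> Vn n" for t y using sc_V that by blast
  have e1: "card {x\<in>Vn n. psi n d x \<in> T} = c * card (T \<inter> ?K)"
    unfolding c_def by (rule count_preimage)
  have e2: "card {x\<in>Vn n. psi n d x \<in> (Vn n :: (nat \<Rightarrow> 'a) set)} = c * card (Vn n \<inter> ?K)"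
    unfolding c_def by (rule count_preimage)
  have e3: "(q - 1) * card (T \<inter> ?K) = card T * Ac"
    using double_count[OF dpos cop TV Tsc] cardG unfolding Ac_def by simp
  have e4: "(q - 1) * card (Vn n \<inter> ?K) = card (Vn n :: (nat \<Rightarrow> 'a) set) * Ac"
    using double_count[of n d "Vn n :: (nat \<Rightarrow> 'a) set", OF dpos cop subset_refl Vsc] cardG unfolding Ac_def by simp
  have "{x\<in>Vn n. psi n d x \<in> (Vn n :: (nat \<Rightarrow> 'a) set)} = (Vn n :: (nat \<Rightarrow> 'a) set)"
    using psi_K by (auto simp: Kn_def)
  with e2 have e2': "card (Vn n :: (nat \<Rightarrow> 'a) set) = c * card (Vn n \<inter> ?K)" by simp
  have oneK: "(\<lambda>j\<in>{..<n}. 1::'a) \<in> Vn n \<inter> ?K"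
    by (auto simp: Kn_def Vn_iff powok_def intro: exI[of _ 1])
  have "finite (Vn n \<inter> ?K)" using finite_Vn by blast
  then have Kpos: "card (Vn n \<inter> ?K) > 0" using oneK card_gt_0_iff by blast
  have "(q - 1) * card (Vn n \<inter> ?K) = (c * Ac) * card (Vn n \<inter> ?K)"
    using e4 e2' by (simp add: mult_ac)
  then have qc: "q - 1 = c * Ac" using Kpos by simp
  define S where "S = {x \<in> Pi\<^sub>E {..<n} (\<lambda>_. UNIV - {0}). (\<Sum>j<n. a j * x j ^ d j) = 0}"
  have SS: "S = {x\<in>Vn n. psi n d x \<in> T}"
  proof -
    have "(\<Sum>j<n. a j * psi n d x j) = (\<Sum>j<n. a j * x j ^ d j)" for x
      by (rule sum.cong) (auto simp: psi_def)
    moreover have "psi n d x \<in> Vn n" if "x \<in> Vn n" for x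
      using psi_K[OF that] by (simp add: Kn_def)
    ultimately show ?thesis unfolding S_def T_def Vn_def[symmetric] by auto
  qed
  have "(q - 1) * card S = (q - 1) * card T"
  proof -
    have "(q - 1) * card S = c * ((q - 1) * card (T \<inter> ?K))" using SS e1 by (simp add: mult_ac)
    also have "\<dots> = c * (card T * Ac)" using e3 by simp
    also have "\<dots> = (c * Ac) * card T" by (simp add: mult_ac)
    also have "\<dots> = (q - 1) * card T" using qc by simp
    finally show ?thesis .
  qed
  then have ST: "card S = card T" using q2 by simp
  have "real (card T) * real q = (real q - 1) ^ n + (-1) ^ n * (real q - 1)"
    unfolding T_def q_def by (rule lin_count[OF an])
  then show ?thesis using q2 ST unfolding S_def[symmetric] by (simp add: field_simps)
qed

end
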